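(* Let $(X,d)$ be a metric space and $A\subset X$ a subset. Let $\{\sigma_{xy}\}_{x,y\in A}$ be a collection of geodesics $\sigma_{xy}\colon[0,1]\to X$ (i.e. $d(\sigma_{xy}(s),\sigma_{xy}(t))=|s-t|\,d(x,y)$) such that $\sigma_{xy}(0)=x$, $\sigma_{xy}(1)=y$, and $\sigma_{xy}(t)=\sigma_{yx}(1-t)$ for all $t\in[0,1]$ and $x,y\in A$. If \[ d(\sigma_{xy}(t),\sigma_{xz}(t))\le t\,d(y,z) \] for all $x,y,z\in A$ and $t\in[0,1]$, then \[ d(\sigma_{x_1x_2}(t),\sigma_{y_1y_2}(t))\le W_1\big((1-t)\delta_{x_1}+t\delta_{x_2},\,(1-t)\delta_{y_1}+t\delta_{y_2}\big) \] for all $t\in[0,1]$ and $x_1,x_2,y_1,y_2\in A$.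
   Context: For Radon probability measures $\mu,\nu$ on $X$, the first Wasserstein distance is $W_1(\mu,\nu)=\inf_{\gamma}\int_{X\times X}d(x,y)\,d\gamma(x,y)$, the infimum over all couplings $\gamma$ of $(\mu,\nu)$ (probability measures on $X\times X$ with marginals $\mu$ and $\nu$). $\delta_x$ is the Dirac measure at $x$. *)

theory Defs
  imports "HOL-Probability.Probability"
begin

definition couplings :: "'a pmf \<Rightarrow> 'b pmf \<Rightarrow> ('a \<times> 'b) pmf set" where
  "couplings \<mu> \<nu> = {\<gamma>. map_pmf fst \<gamma> = \<mu> \<and> map_pmf snd \<gamma> = \<nu>}"

definition W1 :: "'a::metric_space pmf \<Rightarrow> 'a pmf \<Rightarrow> real" where
  "W1 \<mu> \<nu> = Inf ((\<lambda>\<gamma>. measure_pmf.expectation \<gamma> (\<lambda>(x, y). dist x y)) ` couplings \<mu> \<nu>)"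

text \<open>The two-point measure (1 - t) \<delta>_x + t \<delta>_y, for t in [0,1].\<close>
definition two_point :: "real \<Rightarrow> 'a \<Rightarrow> 'a \<Rightarrow> 'a pmf" where
  "two_point t x y = map_pmf (\<lambda>b. if b then y else x) (bernoulli_pmf t)"

end

theory Submission
  imports Defs
begin

lemma two_point_exp:
  assumes "t \<in> {0..1}"
  shows "measure_pmf.expectation (two_point t a b) f = (1 - t) * f a + t * (f b :: real)"
  using assms unfolding two_point_def by (simp add: algebra_simps)

lemma set_two_point: "set_pmf (two_point t a b) \<subseteq> {a, b}"
  unfolding two_point_def by auto

lemma key:
  fixes \<phi> \<psi> :: "'a::metric_space \<Rightarrow> real"
  assumes t: "t \<in> {0..1}"
    and g: "\<gamma> \<in> couplings (two_point t x1 x2) (two_point t y1 y2)"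
    and pot: "\<And>x y. x \<in> {x1, x2} \<Longrightarrow> y \<in> {y1, y2} \<Longrightarrow> \<phi> x + \<psi> y \<le> dist x y"
  shows "(1 - t) * \<phi> x1 + t * \<phi> x2 + ((1 - t) * \<psi> y1 + t * \<psi> y2)
         \<le> measure_pmf.expectation \<gamma> (\<lambda>(x, y). dist x y)"
proof -
  have m1: "map_pmf fst \<gamma> = two_point t x1 x2" and m2: "map_pmf snd \<gamma> = two_point t y1 y2"
    using g unfolding couplings_def by auto
  have sub: "set_pmf \<gamma> \<subseteq> {x1, x2} \<times> {y1, y2}"
  proof
    fix p assume p: "p \<in> set_pmf \<gamma>"
    have "fst p \<in> set_pmf (map_pmf fst \<gamma>)" "snd p \<in> set_pmf (map_pmf snd \<gamma>)"
      using p by auto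
    then show "p \<in> {x1, x2} \<times> {y1, y2}" using m1 m2 set_two_point
      by (metis mem_Sigma_iff prod.collapse subsetD)
  qed
  have fin: "finite (set_pmf \<gamma>)" by (rule finite_subset[OF sub]) auto
  have "measure_pmf.expectation \<gamma> (\<lambda>p. \<phi> (fst p) + \<psi> (snd p))
        \<le> measure_pmf.expectation \<gamma> (\<lambda>(x, y). dist x y)"
    apply (rule integral_mono_AE)
      apply (rule integrable_measure_pmf_finite[OF fin])+
    using sub pot by (auto simp: AE_measure_pmf_iff)
  moreover have "measure_pmf.expectation \<gamma> (\<lambda>p. \<phi> (fst p) + \<psi> (snd p))
      = measure_pmf.expectation \<gamma> (\<lambda>p. \<phi> (fst p)) + measure_pmf.expectation \<gamma> (\<lambda>p. \<psi> (snd p))"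
    by (rule Bochner_Integration.integral_add; rule integrable_measure_pmf_finite[OF fin])
  moreover have "measure_pmf.expectation \<gamma> (\<lambda>p. \<phi> (fst p)) = measure_pmf.expectation (map_pmf fst \<gamma>) \<phi>"
    by simp
  moreover have "measure_pmf.expectation \<gamma> (\<lambda>p. \<psi> (snd p)) = measure_pmf.expectation (map_pmf snd \<gamma>) \<psi>"
    by simp
  ultimately show ?thesis using m1 m2 two_point_exp[OF t, of x1 x2 \<phi>] two_point_exp[OF t, of y1 y2 \<psi>] by simp
qed

lemma W1_ge:
  fixes \<phi> \<psi> :: "'a::metric_space \<Rightarrow> real"
  assumes t: "t \<in> {0..1}"
    and pot: "\<And>x y. x \<in> {x1, x2} \<Longrightarrow> y \<in> {y1, y2} \<Longrightarrow> \<phi> x + \<psi> y \<le> dist x y"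
  shows "(1 - t) * \<phi> x1 + t * \<phi> x2 + ((1 - t) * \<psi> y1 + t * \<psi> y2)
         \<le> W1 (two_point t x1 x2) (two_point t y1 y2)"
  unfolding W1_def
proof (rule cInf_greatest)
  let ?\<gamma> = "pair_pmf (two_point t x1 x2) (two_point t y1 y2)"
  have "?\<gamma> \<in> couplings (two_point t x1 x2) (two_point t y1 y2)"
    unfolding couplings_def by (simp add: map_fst_pair_pmf map_snd_pair_pmf)
  then show "(\<lambda>\<gamma>. measure_pmf.expectation \<gamma> (\<lambda>(x, y). dist x y)) `
       couplings (two_point t x1 x2) (two_point t y1 y2) \<noteq> {}" by blast
next
  fix c assume "c \<in> (\<lambda>\<gamma>. measure_pmf.expectation \<gamma> (\<lambda>(x, y). dist x y)) `
       couplings (two_point t x1 x2) (two_point t y1 y2)"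
  then show "(1 - t) * \<phi> x1 + t * \<phi> x2 + ((1 - t) * \<psi> y1 + t * \<psi> y2) \<le> c"
    using key[OF t _ pot] by blast
qed


theorem lemma3p1:
  fixes A :: "'a::metric_space set"
    and \<sigma> :: "'a \<Rightarrow> 'a \<Rightarrow> real \<Rightarrow> 'a"
  assumes geod: "\<And>x y s t. x \<in> A \<Longrightarrow> y \<in> A \<Longrightarrow> s \<in> {0..1} \<Longrightarrow> t \<in> {0..1} \<Longrightarrow>
        dist (\<sigma> x y s) (\<sigma> x y t) = \<bar>s - t\<bar> * dist x y"
    and start: "\<And>x y. x \<in> A \<Longrightarrow> y \<in> A \<Longrightarrow> \<sigma> x y 0 = x"
    and endp: "\<And>x y. x \<in> A \<Longrightarrow> y \<in> A \<Longrightarrow> \<sigma> x y 1 = y"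
    and rev: "\<And>x y t. x \<in> A \<Longrightarrow> y \<in> A \<Longrightarrow> t \<in> {0..1} \<Longrightarrow> \<sigma> x y t = \<sigma> y x (1 - t)"
    and contr: "\<And>x y z t. x \<in> A \<Longrightarrow> y \<in> A \<Longrightarrow> z \<in> A \<Longrightarrow> t \<in> {0..1} \<Longrightarrow>
        dist (\<sigma> x y t) (\<sigma> x z t) \<le> t * dist y z"
    and t: "t \<in> {0..1}"
    and pts: "x1 \<in> A" "x2 \<in> A" "y1 \<in> A" "y2 \<in> A"
  shows "dist (\<sigma> x1 x2 t) (\<sigma> y1 y2 t) \<le> W1 (two_point t x1 x2) (two_point t y1 y2)"
proof -
  have t1: "1 - t \<in> {0..1}" using t by auto
  define D where "D = dist (\<sigma> x1 x2 t) (\<sigma> y1 y2 t)"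
  have G1: "D \<le> (1 - t) * dist x1 y1 + t * dist x2 y2"
  proof -
    have "D \<le> dist (\<sigma> x1 x2 t) (\<sigma> x1 y2 t) + dist (\<sigma> x1 y2 t) (\<sigma> y1 y2 t)"
      unfolding D_def by (rule dist_triangle)
    moreover have "dist (\<sigma> x1 x2 t) (\<sigma> x1 y2 t) \<le> t * dist x2 y2"
      using contr[of x1 x2 y2 t] pts t by simp
    moreover have "dist (\<sigma> x1 y2 t) (\<sigma> y1 y2 t) \<le> (1 - t) * dist x1 y1"
      using contr[of y2 x1 y1 "1 - t"] rev[of x1 y2 t] rev[of y1 y2 t] pts t t1 by simp
    ultimately show ?thesis by linarith
  qed
  have G2gen: "dist (\<sigma> a1 a2 s) (\<sigma> b1 b2 s) \<le> \<bar>1 - 2 * s\<bar> * dist a1 b1 + s * (dist a1 b2 + dist a2 b1)"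
    if p: "a1 \<in> A" "a2 \<in> A" "b1 \<in> A" "b2 \<in> A" and s: "s \<in> {0..1}" for a1 a2 b1 b2 s
  proof -
    have s1: "1 - s \<in> {0..1}" using s by auto
    have "dist (\<sigma> a1 a2 s) (\<sigma> b1 b2 s) \<le> dist (\<sigma> a1 a2 s) (\<sigma> a1 b1 s) + dist (\<sigma> a1 b1 s) (\<sigma> b1 b2 s)"
      by (rule dist_triangle)
    moreover have "dist (\<sigma> a1 b1 s) (\<sigma> b1 b2 s) \<le> dist (\<sigma> a1 b1 s) (\<sigma> b1 a1 s) + dist (\<sigma> b1 a1 s) (\<sigma> b1 b2 s)"
      by (rule dist_triangle)
    moreover have "dist (\<sigma> a1 a2 s) (\<sigma> a1 b1 s) \<le> s * dist a2 b1" using contr[of a1 a2 b1 s] p s by simp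
    moreover have "dist (\<sigma> b1 a1 s) (\<sigma> b1 b2 s) \<le> s * dist a1 b2" using contr[of b1 a1 b2 s] p s by simp
    moreover have "dist (\<sigma> a1 b1 s) (\<sigma> b1 a1 s) = \<bar>1 - 2 * s\<bar> * dist a1 b1"
      using rev[of a1 b1 s] geod[of b1 a1 "1 - s" s] p s s1 by (simp add: dist_commute)
    ultimately show ?thesis by (simp add: algebra_simps)
  qed
  have G2: "D \<le> \<bar>1 - 2 * t\<bar> * dist x1 y1 + t * (dist x1 y2 + dist x2 y1)"
    unfolding D_def by (rule G2gen[OF pts t])
  have G3: "D \<le> \<bar>1 - 2 * (1 - t)\<bar> * dist x2 y2 + (1 - t) * (dist x2 y1 + dist x1 y2)"
  proof -
    have "D = dist (\<sigma> x2 x1 (1 - t)) (\<sigma> y2 y1 (1 - t))"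
      unfolding D_def using rev[of x1 x2 t] rev[of y1 y2 t] pts t by simp
    then show ?thesis using G2gen[of x2 x1 y2 y1 "1 - t"] pts t1 by simp
  qed
  have "D \<le> W1 (two_point t x1 x2) (two_point t y1 y2)"
  proof (cases "x1 = x2")
    case True
    have "(1 - t) * (0::real) + t * 0 + ((1 - t) * dist x1 y1 + t * dist x1 y2)
        \<le> W1 (two_point t x1 x2) (two_point t y1 y2)"
      by (rule W1_ge[OF t]) (use True in auto)
    then show ?thesis using G1 True by simp
  next
    case F1: False
    show ?thesis
    proof (cases "y1 = y2")
      case True
      have "(1 - t) * dist x1 y1 + t * dist x2 y1 + ((1 - t) * (0::real) + t * 0)
          \<le> W1 (two_point t x1 x2) (two_point t y1 y2)"
        by (rule W1_ge[OF t]) (use True in auto)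
      then show ?thesis using G1 True by simp
    next
      case F2: False
      show ?thesis
      proof (cases "dist x1 y2 + dist x2 y1 \<ge> dist x1 y1 + dist x2 y2")
        case True
        let ?\<phi> = "\<lambda>x. if x = x1 then 0 else dist x2 y1 - dist x1 y1"
        let ?\<psi> = "\<lambda>y. if y = y1 then dist x1 y1 else dist x2 y2 - (dist x2 y1 - dist x1 y1)"
        have "(1 - t) * ?\<phi> x1 + t * ?\<phi> x2 + ((1 - t) * ?\<psi> y1 + t * ?\<psi> y2)
            \<le> W1 (two_point t x1 x2) (two_point t y1 y2)"
          by (rule W1_ge[OF t]) (use True F1 F2 in auto)
        then show ?thesis using G1 F1 F2 by (simp add: algebra_simps)
      next
        case False
        show ?thesis
        proof (cases "t \<le> 1/2")
          case True
          let ?\<phi> = "\<lambda>x. if x = x1 then 0 else dist x2 y1 - dist x1 y1"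
          let ?\<psi> = "\<lambda>y. if y = y1 then dist x1 y1 else dist x1 y2"
          have "(1 - t) * ?\<phi> x1 + t * ?\<phi> x2 + ((1 - t) * ?\<psi> y1 + t * ?\<psi> y2)
              \<le> W1 (two_point t x1 x2) (two_point t y1 y2)"
            by (rule W1_ge[OF t]) (use False F1 F2 in auto)
          moreover have "\<bar>1 - 2 * t\<bar> = 1 - 2 * t" using True by simp
          ultimately show ?thesis using G2 F1 F2 by (simp add: algebra_simps)
        next
          case T: False
          let ?\<phi> = "\<lambda>x. if x = x1 then dist x1 y2 - dist x2 y2 else 0"
          let ?\<psi> = "\<lambda>y. if y = y1 then dist x2 y1 else dist x2 y2"
          have "(1 - t) * ?\<phi> x1 + t * ?\<phi> x2 + ((1 - t) * ?\<psi> y1 + t * ?\<psi> y2)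
              \<le> W1 (two_point t x1 x2) (two_point t y1 y2)"
            by (rule W1_ge[OF t]) (use False F1 F2 in \<open>auto simp: dist_commute\<close>)
          moreover have "\<bar>1 - 2 * (1 - t)\<bar> = 2 * t - 1" using T by simp
          ultimately show ?thesis using G3 F1 F2 by (simp add: algebra_simps)
        qed
      qed
    qed
  qed
  then show ?thesis by (simp add: D_def)
qed

end
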